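(* Let $S=\{p_1,\dots,p_N\}\subset\mathbb{R}^n$, let $f:S\to\mathbb{R}^m$, and let $x\in\mathbb{R}^n\setminus S$. Suppose there exist $J\subset\{1,\dots,N\}$, a point $f_0$ in the convex hull of $\{f(p_j)\}_{j\in J}$, and $\lambda_0>0$ such that $\|f_0-f(p_j)\|=\lambda_0\|x-p_j\|$ for all $j\in J$ and $\|f_0-f(p_i)\|\le\lambda_0\|x-p_i\|$ for all $i\in\{1,\dots,N\}$. Then $\lambda_0=\lambda(f,S)(x)$ and $f_0=K(f,S)(x)$.
   Context: $\|\cdot\|$ is the Euclidean norm. $\lambda(f,S)(x):=\inf_{y\in\mathbb{R}^m}\sup_{i\in\{1,\dots,N\}}\|y-f(p_i)\|/\|x-p_i\|$. There is a unique $y\in\mathbb{R}^m$ attaining this infimum, and it is denoted $K(f,S)(x)$ (the Kirszbraun value of $f$ restricted to $S$ at $x$). *)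

theory Defs
  imports "HOL-Analysis.Analysis"
begin

definition kb_ratio :: "('a::euclidean_space \<Rightarrow> 'b::euclidean_space) \<Rightarrow> 'a set \<Rightarrow> 'a \<Rightarrow> 'b \<Rightarrow> real" where
  "kb_ratio f S x y = (SUP p\<in>S. norm (y - f p) / norm (x - p))"

definition kb_lambda :: "('a::euclidean_space \<Rightarrow> 'b::euclidean_space) \<Rightarrow> 'a set \<Rightarrow> 'a \<Rightarrow> real" where
  "kb_lambda f S x = (INF y. kb_ratio f S x y)"

definition kirszbraun :: "('a::euclidean_space \<Rightarrow> 'b::euclidean_space) \<Rightarrow> 'a set \<Rightarrow> 'a \<Rightarrow> 'b" where
  "kirszbraun f S x = (THE y. kb_ratio f S x y = kb_lambda f S x)"

end

theory Submission
  imports Defs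
begin

lemma key_dir:
  fixes f0 y :: "'b::euclidean_space"
  assumes "finite T" "\<forall>v\<in>T. 0 \<le> u v" "sum u T = 1" "(\<Sum>v\<in>T. u v *\<^sub>R v) = f0"
  shows "\<exists>v\<in>T. inner (y - f0) (f0 - v) \<ge> 0"
proof (rule ccontr)
  assume "\<not> ?thesis"
  hence neg: "\<forall>v\<in>T. inner (y - f0) (f0 - v) < 0" by auto
  have "(\<Sum>v\<in>T. u v *\<^sub>R (f0 - v)) = sum u T *\<^sub>R f0 - (\<Sum>v\<in>T. u v *\<^sub>R v)"
    by (simp add: scaleR_diff_right sum_subtractf scaleR_sum_left)
  also have "\<dots> = 0" using assms by simp
  finally have z: "(\<Sum>v\<in>T. u v *\<^sub>R (f0 - v)) = 0" .
  have "(\<Sum>v\<in>T. u v * inner (y - f0) (f0 - v)) = inner (y - f0) (\<Sum>v\<in>T. u v *\<^sub>R (f0 - v))"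
    by (simp add: inner_sum_right)
  also have "\<dots> = 0" using z by simp
  finally have s0: "(\<Sum>v\<in>T. u v * inner (y - f0) (f0 - v)) = 0" .
  have np: "\<forall>v\<in>T. u v * inner (y - f0) (f0 - v) \<le> 0"
    using neg assms(2) by (meson less_imp_le mult_nonneg_nonpos)
  have s1: "(\<Sum>v\<in>T. - (u v * inner (y - f0) (f0 - v))) = 0" using s0 by (simp add: sum_negf)
  have "\<forall>v\<in>T. - (u v * inner (y - f0) (f0 - v)) = 0"
    using sum_nonneg_eq_0_iff[OF assms(1), of "\<lambda>v. - (u v * inner (y - f0) (f0 - v))"] s1 np by auto
  hence "\<forall>v\<in>T. u v * inner (y - f0) (f0 - v) = 0" by simp
  hence "\<forall>v\<in>T. u v = 0" using neg by (metis less_irrefl mult_eq_0_iff)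
  hence "sum u T = 0" by simp
  thus False using assms(3) by simp
qed

lemma norm_gt:
  fixes f0 y v :: "'b::euclidean_space"
  assumes "y \<noteq> f0" "inner (y - f0) (f0 - v) \<ge> 0"
  shows "norm (y - v) > norm (f0 - v)"
proof -
  have gen: "(norm (a + b))^2 = (norm a)^2 + 2 * inner a b + (norm b)^2" for a b :: 'b
    by (simp add: power2_norm_eq_inner inner_add_left inner_add_right inner_commute)
  have "(norm (y - v))^2 = (norm ((y - f0) + (f0 - v)))^2" by simp
  also have "\<dots> = (norm (y - f0))^2 + 2 * inner (y - f0) (f0 - v) + (norm (f0 - v))^2"
    by (rule gen)
  also have "\<dots> > (norm (f0 - v))^2"
  proof -
    have "norm (y - f0) > 0" using assms(1) by simp
    hence "(norm (y - f0))^2 > 0" by simp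
    thus ?thesis using assms(2) by linarith
  qed
  finally show ?thesis by (meson norm_ge_zero power_less_imp_less_base)
qed

theorem mainTheorem6:
  fixes S :: "'a::euclidean_space set" and f :: "'a \<Rightarrow> 'b::euclidean_space"
    and x :: 'a and J :: "'a set" and f0 :: 'b and lam0 :: real
  assumes "finite S"
    and "x \<notin> S"
    and "J \<subseteq> S"
    and "f0 \<in> convex hull (f ` J)"
    and "lam0 > 0"
    and "\<forall>p\<in>J. norm (f0 - f p) = lam0 * norm (x - p)"
    and "\<forall>p\<in>S. norm (f0 - f p) \<le> lam0 * norm (x - p)"
  shows "lam0 = kb_lambda f S x \<and> f0 = kirszbraun f S x"
proof -
  have fJ: "finite (f ` J)" using assms(1,3) finite_subset by blast
  obtain u where u: "\<forall>v\<in>f ` J. 0 \<le> u v" "sum u (f ` J) = 1" "(\<Sum>v\<in>f ` J. u v *\<^sub>R v) = f0"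
    using assms(4) convex_hull_finite[OF fJ] by auto
  have Jne: "J \<noteq> {}" using assms(4) by auto
  hence Sne: "S \<noteq> {}" using assms(3) by auto
  have bdd: "bdd_above ((\<lambda>p. norm (y - f p) / norm (x - p)) ` S)" for y
    using assms(1) by simp
  have xp: "norm (x - p) > 0" if "p \<in> S" for p using that assms(2) by auto
  have gt: "kb_ratio f S x y > lam0" if "y \<noteq> f0" for y
  proof -
    obtain v where v: "v \<in> f ` J" "inner (y - f0) (f0 - v) \<ge> 0"
      using key_dir[OF fJ u] by blast
    then obtain p where p: "p \<in> J" "v = f p" by auto
    have pS: "p \<in> S" using p assms(3) by auto
    have "norm (y - f p) > lam0 * norm (x - p)"
      using norm_gt[OF that v(2)] p assms(6) by auto
    hence "norm (y - f p) / norm (x - p) > lam0" using xp[OF pS] by (simp add: pos_less_divide_eq)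
    also have "norm (y - f p) / norm (x - p) \<le> kb_ratio f S x y"
      unfolding kb_ratio_def by (rule cSUP_upper[OF pS bdd])
    finally show ?thesis .
  qed
  have eq: "kb_ratio f S x f0 = lam0"
  proof (rule antisym)
    show "kb_ratio f S x f0 \<le> lam0" unfolding kb_ratio_def
    proof (rule cSUP_least[OF Sne])
      fix p assume "p \<in> S"
      thus "norm (f0 - f p) / norm (x - p) \<le> lam0"
        using assms(7) xp by (simp add: pos_divide_le_eq mult.commute)
    qed
    obtain p where p: "p \<in> J" using Jne by auto
    have pS: "p \<in> S" using p assms(3) by auto
    have "lam0 = norm (f0 - f p) / norm (x - p)" using assms(6) p xp[OF pS] by simp
    also have "\<dots> \<le> kb_ratio f S x f0"
      unfolding kb_ratio_def by (rule cSUP_upper[OF pS bdd])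
    finally show "lam0 \<le> kb_ratio f S x f0" .
  qed
  have ge: "kb_ratio f S x y \<ge> lam0" for y
    using gt[of y] eq by (cases "y = f0") auto
  have lam: "kb_lambda f S x = lam0" unfolding kb_lambda_def
  proof (rule antisym)
    show "(INF y. kb_ratio f S x y) \<le> lam0"
      using cINF_lower[of "\<lambda>y. kb_ratio f S x y" UNIV f0] ge eq
      by (metis bdd_belowI2 UNIV_I)
    show "lam0 \<le> (INF y. kb_ratio f S x y)" by (rule cINF_greatest) (use ge in auto)
  qed
  have "kirszbraun f S x = f0" unfolding kirszbraun_def lam
  proof (rule the_equality)
    show "kb_ratio f S x f0 = lam0" by (rule eq)
    fix y assume "kb_ratio f S x y = lam0" thus "y = f0" using gt by force
  qed
  thus ?thesis using lam by simp
qed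

end
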